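(* Let $G=\mathrm{Spin}(2r+1)$ with $r\geqslant3$, let $\lambda\in\Lambda^+$ be such that $\alpha_r\notin\operatorname{Supp}(\lambda)$, and let $\lambda^{\mathrm{lb}}_{\mathrm{ad}}\in\mathrm{LB}(\lambda)$ be the adjoint little brother of $\lambda$, i.e. $\lambda^{\mathrm{lb}}_{\mathrm{ad}}=\lambda-(\alpha_p+\alpha_{p+1}+\cdots+\alpha_r)$ where $p=\max\{i<r:\alpha_i\in\operatorname{Supp}(\lambda)\}$ (assumed to exist). Then $\lambda^{\mathrm{lb}}_{\mathrm{ad}}\in\mathrm{LB}_G(\lambda)$.
   Context: $G=\mathrm{Spin}(2r+1)$ over an algebraically closed field of characteristic zero (simply connected, $\mathcal{X}(T)=\Lambda$), $T\subset B$ a maximal torus and Borel subgroup, $\Phi^+$ the positive roots, simple roots $\alpha_1,\dots,\alpha_r$ numbered as in Bourbaki (type $\mathsf{B}_r$, $\alpha_r$ the short simple root), $\Lambda^+$ the dominant weights. $\Pi^+(\lambda)=\{\mu\in\Lambda^+:\lambda-\mu\in\mathbb{N}[\Delta]\}$, $\Pi_G^+(\lambda)=\{\mu\in\Lambda^+:\lambda-\mu\in\mathbb{Q}_{\geq0}[\Delta]\}$; $\operatorname{Supp}(\lambda)=\{\alpha\in\Delta:\langle\lambda,\alpha^\vee\rangle\neq0\}$; $\Phi^+(\lambda)$ is the set of positive roots whose expression in simple roots involves some element of $\operatorname{Supp}(\lambda)$; $\nu\leqslant^\lambda_\mathbb{Q}\mu$ iff $\mu-\nu\in\mathbb{Q}_{\geq0}[\Phi^+(\lambda)]$.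 $\mathrm{LB}(\lambda)$ is the set of adjoint little brothers (here $\{\lambda^{\mathrm{lb}}_{\mathrm{ad}}\}$ when $\lambda\neq0$ and $\alpha_r\notin\operatorname{Supp}(\lambda)$), and $\mathrm{LB}_G(\lambda)$ is the set of elements of $(\Pi_G^+(\lambda)\smallsetminus\Pi^+(\lambda))\cup\mathrm{LB}(\lambda)$ maximal in this set w.r.t. $\leqslant^\lambda_\mathbb{Q}$. *)

theory Defs
  imports Complex_Main
begin

text \<open>Root datum of type B_r (G = Spin(2r+1), simply connected, so the character
lattice is the full weight lattice).  A (rational) weight is encoded by its
coordinates with respect to the simple roots alpha_1, ..., alpha_r (Bourbaki
numbering, alpha_r short): a function nat => rat vanishing outside 1..r.\<close>

definition supported :: "nat \<Rightarrow> (nat \<Rightarrow> rat) \<Rightarrow> bool" where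
  "supported r \<mu> \<longleftrightarrow> (\<forall>i. i \<notin> {1..r} \<longrightarrow> \<mu> i = 0)"

text \<open>Cartan integers  cartanB r i j = <alpha_i, alpha_j^vee>.\<close>
definition cartanB :: "nat \<Rightarrow> nat \<Rightarrow> nat \<Rightarrow> rat" where
  "cartanB r i j =
     (if i = j then 2
      else if j = i + 1 \<or> i = j + 1 then (if i + 1 = r \<and> j = r then -2 else -1)
      else 0)"

definition pairing :: "nat \<Rightarrow> (nat \<Rightarrow> rat) \<Rightarrow> nat \<Rightarrow> rat" where
  "pairing r \<mu> j = (\<Sum>i=1..r. \<mu> i * cartanB r i j)"

definition is_weight :: "nat \<Rightarrow> (nat \<Rightarrow> rat) \<Rightarrow> bool" where
  "is_weight r \<mu> \<longleftrightarrow> supported r \<mu> \<and> (\<forall>j\<in>{1..r}. pairing r \<mu> j \<in> \<int>)"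

definition dominant :: "nat \<Rightarrow> (nat \<Rightarrow> rat) \<Rightarrow> bool" where
  "dominant r \<mu> \<longleftrightarrow> is_weight r \<mu> \<and> (\<forall>j\<in>{1..r}. pairing r \<mu> j \<ge> 0)"

definition Supp :: "nat \<Rightarrow> (nat \<Rightarrow> rat) \<Rightarrow> nat set" where
  "Supp r la = {j \<in> {1..r}. pairing r la j \<noteq> 0}"

text \<open>Indicator of the interval [a,b]: the coordinates of alpha_a + ... + alpha_b.\<close>
definition ind :: "nat \<Rightarrow> nat \<Rightarrow> nat \<Rightarrow> rat" where
  "ind a b k = (if a \<le> k \<and> k \<le> b then 1 else 0)"

text \<open>Positive roots of B_r in simple-root coordinates:
  e_i - e_j = alpha_i + ... + alpha_(j-1),  e_i = alpha_i + ... + alpha_r,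
  e_i + e_j = alpha_i + ... + alpha_(j-1) + 2(alpha_j + ... + alpha_r).\<close>
definition pos_roots :: "nat \<Rightarrow> (nat \<Rightarrow> rat) set" where
  "pos_roots r =
     {ind i (j - 1) | i j. 1 \<le> i \<and> i < j \<and> j \<le> r}
   \<union> {ind i r | i. 1 \<le> i \<and> i \<le> r}
   \<union> {(%k. ind i (j - 1) k + 2 * ind j r k) | i j. 1 \<le> i \<and> i < j \<and> j \<le> r}"

definition pos_roots_lam :: "nat \<Rightarrow> (nat \<Rightarrow> rat) \<Rightarrow> (nat \<Rightarrow> rat) set" where
  "pos_roots_lam r la = {\<beta> \<in> pos_roots r. \<exists>i\<in>Supp r la. \<beta> i \<noteq> 0}"

definition leQ :: "nat \<Rightarrow> (nat \<Rightarrow> rat) \<Rightarrow> (nat \<Rightarrow> rat) \<Rightarrow> (nat \<Rightarrow> rat) \<Rightarrow> bool" where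
  "leQ r la \<nu> \<mu> \<longleftrightarrow>
     (\<exists>c :: (nat \<Rightarrow> rat) \<Rightarrow> rat. (\<forall>\<beta>\<in>pos_roots_lam r la. c \<beta> \<ge> 0) \<and>
        (\<forall>k. \<mu> k - \<nu> k = (\<Sum>\<beta>\<in>pos_roots_lam r la. c \<beta> * \<beta> k)))"

definition Pi_plus :: "nat \<Rightarrow> (nat \<Rightarrow> rat) \<Rightarrow> (nat \<Rightarrow> rat) set" where
  "Pi_plus r la = {\<mu>. dominant r \<mu> \<and> (\<forall>i. la i - \<mu> i \<in> \<nat>)}"

definition Pi_plus_G :: "nat \<Rightarrow> (nat \<Rightarrow> rat) \<Rightarrow> (nat \<Rightarrow> rat) set" where
  "Pi_plus_G r la = {\<mu>. dominant r \<mu> \<and> (\<forall>i. la i - \<mu> i \<ge> 0)}"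

text \<open>LB_G(lambda), given the set LB = LB(lambda) of adjoint little brothers:
  the maximal elements of (Pi^+_G(lambda) - Pi^+(lambda)) \<union> LB w.r.t. <=^lambda_Q.\<close>
definition LB_G :: "nat \<Rightarrow> (nat \<Rightarrow> rat) \<Rightarrow> (nat \<Rightarrow> rat) set \<Rightarrow> (nat \<Rightarrow> rat) set" where
  "LB_G r la LB =
     (let S = (Pi_plus_G r la - Pi_plus r la) \<union> LB in
      {\<nu> \<in> S. \<forall>\<mu>\<in>S. leQ r la \<nu> \<mu> \<longrightarrow> \<mu> = \<nu>})"

definition lb_ad :: "nat \<Rightarrow> (nat \<Rightarrow> rat) \<Rightarrow> (nat \<Rightarrow> rat)" where
  "lb_ad r la = (let p = Max {i \<in> Supp r la. i < r} in (%k. la k - ind p r k))"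

end

theory Submission
  imports Defs
begin

lemma int_nonneg_nat: "(x::rat) \<in> \<int> \<Longrightarrow> 0 \<le> x \<Longrightarrow> x \<in> \<nat>"
  by (metis Ints_cases of_int_0_le_iff of_nat_in_Nats of_nat_nat of_int_of_nat_eq)

lemma half_le: "(x::rat) \<le> 0 \<Longrightarrow> 2*x \<in> \<int> \<Longrightarrow> x \<notin> \<int> \<Longrightarrow> x \<le> -1/2"
proof -
  assume a: "x \<le> 0" "2*x \<in> \<int>" "x \<notin> \<int>"
  then obtain n where n: "2*x = of_int n" by (auto elim: Ints_cases)
  have "of_int n \<le> (0::rat)" using a n by simp
  hence "n \<le> 0" by simp
  moreover have "n \<noteq> 0" using a n by auto
  ultimately have "n \<le> -1" by simp
  hence "of_int n \<le> (-1::rat)" by simp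
  thus ?thesis using n by simp
qed

lemma pairing_formula:
  fixes y :: "nat \<Rightarrow> rat"
  assumes "y 0 = 0" "y (Suc r) = 0" "1 \<le> j" "j \<le> r"
  shows "pairing r y j = 2*y j - (if j = r then 2 else 1) * y (j-1) - y (j+1)"
proof -
  have "pairing r y j = (\<Sum>i\<in>{0..Suc r}. y i * cartanB r i j)"
  proof -
    have "{0..Suc r} = insert 0 (insert (Suc r) {1..r})" by auto
    thus ?thesis unfolding pairing_def using assms by simp
  qed
  also have "\<dots> = (\<Sum>i\<in>{j-1,j,j+1}. y i * cartanB r i j)"
  proof (rule sum.mono_neutral_right)
    show "{j-1,j,j+1} \<subseteq> {0..Suc r}" using assms by auto
    show "\<forall>i\<in>{0..Suc r} - {j-1,j,j+1}. y i * cartanB r i j = 0"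
      unfolding cartanB_def by auto
  qed simp
  also have "\<dots> = y (j-1) * cartanB r (j-1) j + y j * cartanB r j j + y (j+1) * cartanB r (j+1) j"
  proof -
    have "j-1 \<notin> {j, j+1}" "j \<notin> {j+1}" using assms by auto
    thus ?thesis by (simp add: add.assoc)
  qed
  also have "\<dots> = 2*y j - (if j = r then 2 else 1) * y (j-1) - y (j+1)"
  proof (cases "j = 1")
    case True thus ?thesis using assms by (simp add: cartanB_def)
  next
    case False
    hence "(j-1) + 1 = j" using assms by simp
    thus ?thesis using assms by (auto simp: cartanB_def)
  qed
  finally show ?thesis .
qed

lemma seq_int:
  fixes y :: "nat \<Rightarrow> rat" and r p :: nat
  assumes r3: "r \<ge> 3" and p1: "1 \<le> p" and pr: "p < r"
    and nonneg: "\<And>k. 0 \<le> y k" and le1: "\<And>k. y k \<le> ind p r k"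
    and pint: "\<And>j. j\<in>{1..r} \<Longrightarrow> pairing r y j \<in> \<int>"
    and pneg: "\<And>j. p < j \<Longrightarrow> j \<le> r \<Longrightarrow> pairing r y j \<le> 0"
  shows "y k \<in> \<int>"
proof -
  have out: "y k = 0" if "k < p \<or> k > r" for k
    using nonneg[of k] le1[of k] that by (auto simp: ind_def)
  have y0: "y 0 = 0" and ysr: "y (Suc r) = 0" using out p1 by auto
  have le1': "y k \<le> 1" for k using le1[of k] by (auto simp: ind_def split: if_splits)
  define b where "b j = y (Suc j) - y j" for j
  have mid: "2*y j - y (j-1) - y (j+1) = pairing r y j" if "1 \<le> j" "j < r" for j
    using pairing_formula[OF y0 ysr, of j] that by simp
  have mid_int: "2*y j - y (j-1) - y (j+1) \<in> \<int>" if "1 \<le> j" "j < r" for j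
    using mid[OF that] pint[of j] that by simp
  have last: "2*y r - 2*y (r-1) = pairing r y r"
    using pairing_formula[OF y0 ysr, of r] r3 ysr by simp
  have last_int: "2 * b (r-1) \<in> \<int>" and last_neg: "b (r-1) \<le> 0"
  proof -
    have "Suc (r-1) = r" using r3 by simp
    hence e: "2 * b (r-1) = pairing r y r" using last by (simp add: b_def algebra_simps)
    show "2 * b (r-1) \<in> \<int>" using e pint[of r] r3 by simp
    show "b (r-1) \<le> 0" using e pneg[of r] pr by simp
  qed
  have step_eq: "b (Suc n) - b n = - (2*y (Suc n) - y (Suc n - 1) - y (Suc n + 1))" for n
    by (simp add: b_def algebra_simps)
  have bneg: "b j \<le> 0" if "p \<le> j" "j \<le> r-1" for j
    using that(2)
  proof (induction j rule: inc_induct)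
    case base show ?case by (rule last_neg)
  next
    case (step n)
    have "2*y (Suc n) - y (Suc n - 1) - y (Suc n + 1) \<le> 0"
      using mid[of "Suc n"] pneg[of "Suc n"] step(1,2) that(1) by auto
    thus ?case using step(3) step_eq[of n] by linarith
  qed
  have bint: "b j - b p \<in> \<int>" if "p \<le> j" "j \<le> r-1" for j
    using that(1)
  proof (induction j rule: dec_induct)
    case base show ?case by simp
  next
    case (step n)
    have "Suc n < r" using step(2) that(2) by linarith
    hence "2*y (Suc n) - y (Suc n - 1) - y (Suc n + 1) \<in> \<int>"
      using mid_int[of "Suc n"] by simp
    hence "- (2*y (Suc n) - y (Suc n - 1) - y (Suc n + 1)) \<in> \<int>" using Ints_minus by blast
    hence "b (Suc n) - b n \<in> \<int>" using step_eq[of n] by simp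
    hence "(b (Suc n) - b n) + (b n - b p) \<in> \<int>" using step(3) Ints_add by blast
    thus ?case by simp
  qed
  have two_bp: "2 * b p \<in> \<int>"
  proof -
    have "b (r-1) - b p \<in> \<int>" using bint[of "r-1"] pr by simp
    moreover have "(2::rat) \<in> \<int>" by simp
    ultimately have "2 * (b (r-1) - b p) \<in> \<int>" using Ints_mult by blast
    hence "2 * b (r-1) - 2 * (b (r-1) - b p) \<in> \<int>" using last_int Ints_diff by blast
    thus ?thesis by (simp add: algebra_simps)
  qed
  have yp: "y p - b p \<in> \<int>"
  proof -
    have "y (p-1) = 0" using out[of "p-1"] p1 by simp
    thus ?thesis using mid_int[of p] p1 pr by (simp add: b_def algebra_simps)
  qed
  show ?thesis
  proof (cases "b p \<in> \<int>")
    case True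
    have "(y p - b p) + b p \<in> \<int>" using yp True Ints_add by blast
    hence ypi: "y p \<in> \<int>" by simp
    have "y j \<in> \<int>" if "p \<le> j" "j \<le> r" for j
      using that(1)
    proof (induction j rule: dec_induct)
      case base show ?case by (rule ypi)
    next
      case (step n)
      have "n \<le> r-1" using step(2) that(2) by linarith
      hence "b n - b p \<in> \<int>" using bint[of n] step(1) by simp
      hence "(b n - b p) + b p \<in> \<int>" using True Ints_add by blast
      hence "b n \<in> \<int>" by simp
      hence "b n + y n \<in> \<int>" using step(3) by simp
      thus ?case by (simp add: b_def)
    qed
    thus ?thesis using out[of k] by (cases "p \<le> k \<and> k \<le> r") auto
  next
    case False
    have ypn: "y p \<notin> \<int>"
    proof
      assume "y p \<in> \<int>"
      hence "y p - (y p - b p) \<in> \<int>" using yp Ints_diff by blast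
      thus False using False by simp
    qed
    show ?thesis
    proof (cases "p = 1")
      case False
      have "2*y (p-1) - y (p-1-1) - y (p-1+1) \<in> \<int>" using mid_int[of "p-1"] False p1 pr by simp
      moreover have "y (p-1) = 0" "y (p-1-1) = 0" using out p1 by auto
      moreover have "p-1+1 = p" using p1 by simp
      ultimately have "- y p \<in> \<int>" by simp
      hence "- (- y p) \<in> \<int>" using Ints_minus by blast
      hence "y p \<in> \<int>" by simp
      thus ?thesis using ypn by simp
    next
      case True
      have b1: "b 1 \<le> -1/2" using half_le[OF bneg[of 1]] two_bp False True pr by auto
      have "b 2 - b 1 \<in> \<int>" using bint[of 2] True r3 by simp
      have b2n: "b 2 \<notin> \<int>"
      proof
        assume "b 2 \<in> \<int>"
        hence "b 2 - (b 2 - b 1) \<in> \<int>" using \<open>b 2 - b 1 \<in> \<int>\<close> Ints_diff by blast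
        thus False using False True by simp
      qed
      have "(2::rat) \<in> \<int>" by simp
      hence "2*(b 2 - b 1) \<in> \<int>" using \<open>b 2 - b 1 \<in> \<int>\<close> Ints_mult by blast
      hence "2*(b 2 - b 1) + 2 * b 1 \<in> \<int>" using two_bp True Ints_add by blast
      hence "2 * b 2 \<in> \<int>" by (simp add: algebra_simps)
      hence b2: "b 2 \<le> -1/2" using half_le[OF bneg[of 2] _ b2n] True r3 by auto
      have "y 3 = y 1 + b 1 + b 2" by (simp add: b_def numeral_3_eq_3 eval_nat_numeral)
      hence "y 1 \<ge> 1" using b1 b2 nonneg[of 3] by linarith
      hence "y 1 = 1" using le1'[of 1] by simp
      thus ?thesis using ypn True by simp
    qed
  qed
qed

lemma pos_roots_nonneg: "\<beta> \<in> pos_roots r \<Longrightarrow> 0 \<le> \<beta> k"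
  unfolding pos_roots_def ind_def by auto

lemma pairing_diff: "pairing r (\<lambda>k. f k - g k) j = pairing r f j - pairing r g j"
  unfolding pairing_def by (simp add: left_diff_distrib sum_subtractf)

theorem proposition2p16:
  fixes r :: nat and la :: "nat \<Rightarrow> rat"
  assumes "r \<ge> 3"
    and "dominant r la"
    and "r \<notin> Supp r la"
    and "\<exists>i\<in>Supp r la. i < r"
  shows "lb_ad r la \<in> LB_G r la {lb_ad r la}"
proof -
  define S where "S = {i \<in> Supp r la. i < r}"
  have finS: "finite S" unfolding S_def Supp_def by (rule finite_subset[of _ "{1..r}"]) auto
  have neS: "S \<noteq> {}" using assms(4) unfolding S_def by auto
  define p where "p = Max S"
  have pS: "p \<in> S" unfolding p_def using finS neS by (rule Max_in)
  have p1: "1 \<le> p" and pr: "p < r" using pS unfolding S_def Supp_def by auto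
  have lbdef: "lb_ad r la = (\<lambda>k. la k - ind p r k)"
    by (simp add: lb_ad_def p_def S_def Let_def)
  have zero: "pairing r la j = 0" if "p < j" "j \<le> r" for j
  proof (rule ccontr)
    assume nz: "pairing r la j \<noteq> 0"
    hence js: "j \<in> Supp r la" using that p1 unfolding Supp_def by auto
    show False
    proof (cases "j < r")
      case True
      hence "j \<in> S" using js unfolding S_def by auto
      hence "j \<le> p" unfolding p_def using finS by simp
      thus False using that by simp
    next
      case False
      hence "j = r" using that by simp
      thus False using js assms(3) by simp
    qed
  qed
  define lb where "lb = lb_ad r la"
  have "\<mu> = lb" if mS: "\<mu> \<in> (Pi_plus_G r la - Pi_plus r la) \<union> {lb}" and le: "leQ r la lb \<mu>" for \<mu>
  proof (rule ccontr)
    assume ne: "\<mu> \<noteq> lb"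
    hence mG: "\<mu> \<in> Pi_plus_G r la" and mP: "\<mu> \<notin> Pi_plus r la" using mS by auto
    have domm: "dominant r \<mu>" and ge: "\<And>i. la i - \<mu> i \<ge> 0" using mG unfolding Pi_plus_G_def by auto
    obtain c where c: "\<forall>\<beta>\<in>pos_roots_lam r la. c \<beta> \<ge> 0"
      and cs: "\<forall>k. \<mu> k - lb k = (\<Sum>\<beta>\<in>pos_roots_lam r la. c \<beta> * \<beta> k)"
      using le unfolding leQ_def by blast
    have xnn: "\<mu> k - lb k \<ge> 0" for k
      unfolding cs[rule_format]
      by (rule sum_nonneg) (use c pos_roots_nonneg in \<open>auto simp: pos_roots_lam_def\<close>)
    define y where "y k = la k - \<mu> k" for k
    have yint: "y k \<in> \<int>" for k
    proof (rule seq_int[OF assms(1) p1 pr])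
      show "0 \<le> y k" for k using ge[of k] by (simp add: y_def)
      show "y k \<le> ind p r k" for k using xnn[of k] by (simp add: y_def lb_def lbdef)
      have pd: "pairing r y j = pairing r la j - pairing r \<mu> j" for j
        unfolding y_def[abs_def] by (rule pairing_diff)
      show "pairing r y j \<in> \<int>" if "j \<in> {1..r}" for j
        using assms(2) domm that unfolding pd dominant_def is_weight_def by (auto intro: Ints_diff)
      show "pairing r y j \<le> 0" if "p < j" "j \<le> r" for j
        using domm that zero[OF that] p1 unfolding pd dominant_def by auto
    qed
    have "\<mu> \<in> Pi_plus r la"
      unfolding Pi_plus_def using domm yint ge int_nonneg_nat by (auto simp: y_def)
    thus False using mP by simp
  qed
  thus ?thesis unfolding LB_G_def Let_def lb_def by auto
qed

end
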